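(* If $(S,\sqcup,\cap)$ is an ado-semilattice, then $(S,\sqcup)$ is a left regular band and for all $a,b,c\in S$, $a\sqcup(b\cap c)=(a\sqcup b)\cap(a\sqcup c)$.
   Context: An o-semilattice is an algebra $(L,\cap,\sqcup)$ such that $(L,\cap)$ is a semilattice and, with $x\leq y$ iff $x=x\cap y$, for all $x,y,z$: (i) $x\leq x\sqcup y$; (ii) $(x\cap y)\sqcup(y\cap z)\leq y$; (iii) $x\sqcup y\leq x\sqcup(y\cap(x\sqcup y))$; (iv) $x\cap z\leq(x\cap y)\sqcup z$. It is distributive if $(a\cap d)\sqcup((b\cap d)\cap(c\cap d))=((a\cap d)\sqcup(b\cap d))\cap((a\cap d)\sqcup(c\cap d))$ for all $a,b,c,d$. An ado-semilattice is a distributive o-semilattice in which $\sqcup$ is associative. A left regular band is a set with a binary operation $\sqcup$ satisfying $a\sqcup(b\sqcup c)=(a\sqcup b)\sqcup c$, $a\sqcup a=a$, $a\sqcup b=(a\sqcup b)\sqcup a$. *)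

theory Defs
  imports Main
begin

definition is_semilattice :: "('a \<Rightarrow> 'a \<Rightarrow> 'a) \<Rightarrow> bool" where
  "is_semilattice m \<longleftrightarrow>
     (\<forall>x y z. m (m x y) z = m x (m y z)) \<and>
     (\<forall>x y. m x y = m y x) \<and>
     (\<forall>x. m x x = x)"

definition sl_le :: "('a \<Rightarrow> 'a \<Rightarrow> 'a) \<Rightarrow> 'a \<Rightarrow> 'a \<Rightarrow> bool" where
  "sl_le m x y \<longleftrightarrow> x = m x y"

definition o_semilattice :: "('a \<Rightarrow> 'a \<Rightarrow> 'a) \<Rightarrow> ('a \<Rightarrow> 'a \<Rightarrow> 'a) \<Rightarrow> bool" where
  "o_semilattice m j \<longleftrightarrow>
     is_semilattice m \<and>
     (\<forall>x y. sl_le m x (j x y)) \<and>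
     (\<forall>x y z. sl_le m (j (m x y) (m y z)) y) \<and>
     (\<forall>x y. sl_le m (j x y) (j x (m y (j x y)))) \<and>
     (\<forall>x y z. sl_le m (m x z) (j (m x y) z))"

definition distributive_o_semilattice :: "('a \<Rightarrow> 'a \<Rightarrow> 'a) \<Rightarrow> ('a \<Rightarrow> 'a \<Rightarrow> 'a) \<Rightarrow> bool" where
  "distributive_o_semilattice m j \<longleftrightarrow>
     o_semilattice m j \<and>
     (\<forall>a b c d. j (m a d) (m (m b d) (m c d)) =
                m (j (m a d) (m b d)) (j (m a d) (m c d)))"

definition ado_semilattice :: "('a \<Rightarrow> 'a \<Rightarrow> 'a) \<Rightarrow> ('a \<Rightarrow> 'a \<Rightarrow> 'a) \<Rightarrow> bool" where
  "ado_semilattice m j \<longleftrightarrow>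
     distributive_o_semilattice m j \<and> (\<forall>x y z. j (j x y) z = j x (j y z))"

definition left_regular_band :: "('a \<Rightarrow> 'a \<Rightarrow> 'a) \<Rightarrow> bool" where
  "left_regular_band j \<longleftrightarrow>
     (\<forall>a b c. j a (j b c) = j (j a b) c) \<and>
     (\<forall>a. j a a = a) \<and>
     (\<forall>a b. j a b = j (j a b) a)"

end

theory Submission
  imports Defs
begin

locale ado =
  fixes m j :: "'a \<Rightarrow> 'a \<Rightarrow> 'a"
  assumes A: "ado_semilattice m j"
begin

lemma massoc: "m (m x y) z = m x (m y z)"
  using A unfolding ado_semilattice_def distributive_o_semilattice_def o_semilattice_def is_semilattice_def by blast
lemma mcomm: "m x y = m y x"
  using A unfolding ado_semilattice_def distributive_o_semilattice_def o_semilattice_def is_semilattice_def by blast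
lemma midem: "m x x = x"
  using A unfolding ado_semilattice_def distributive_o_semilattice_def o_semilattice_def is_semilattice_def by blast
lemma jassoc: "j (j x y) z = j x (j y z)"
  using A unfolding ado_semilattice_def by blast
lemma ax1: "sl_le m x (j x y)"
  using A unfolding ado_semilattice_def distributive_o_semilattice_def o_semilattice_def by blast
lemma ax2: "sl_le m (j (m x y) (m y z)) y"
  using A unfolding ado_semilattice_def distributive_o_semilattice_def o_semilattice_def by blast
lemma ax3: "sl_le m (j x y) (j x (m y (j x y)))"
  using A unfolding ado_semilattice_def distributive_o_semilattice_def o_semilattice_def by blast
lemma ax4: "sl_le m (m x z) (j (m x y) z)"
  using A unfolding ado_semilattice_def distributive_o_semilattice_def o_semilattice_def by blast
lemma dist0: "j (m a d) (m (m b d) (m c d)) = m (j (m a d) (m b d)) (j (m a d) (m c d))"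
  using A unfolding ado_semilattice_def distributive_o_semilattice_def by blast

abbreviation le where "le x y \<equiv> sl_le m x y"

lemma le_def': "le x y \<longleftrightarrow> m x y = x" unfolding sl_le_def by auto

lemma antisym: "le x y \<Longrightarrow> le y x \<Longrightarrow> x = y"
  by (metis le_def' mcomm)
lemma trans: "le x y \<Longrightarrow> le y z \<Longrightarrow> le x z"
  by (metis le_def' massoc)
lemma refl: "le x x" by (simp add: le_def' midem)
lemma m1: "le (m x y) x" by (metis le_def' massoc mcomm midem)
lemma m2: "le (m x y) y" by (metis le_def' massoc midem)
lemma mglb: "le z x \<Longrightarrow> le z y \<Longrightarrow> le z (m x y)" by (metis le_def' massoc)

lemma lub: "le x d \<Longrightarrow> le y d \<Longrightarrow> le (j x y) d"
  using ax2[of x d y] by (metis le_def' mcomm)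
lemma ub2: "le x d \<Longrightarrow> le y d \<Longrightarrow> le y (j x y)"
  using ax4[of d y x] by (metis le_def' mcomm)
lemma jidem: "j x x = x"
  by (meson antisym ax1 lub refl)
lemma absorb: "le y x \<Longrightarrow> j x y = x"
  by (meson antisym ax1 lub refl)
lemma jcomm: "le x d \<Longrightarrow> le y d \<Longrightarrow> j x y = j y x"
  by (meson antisym ax1 lub ub2)
lemma absorb2: "le y x \<Longrightarrow> j y x = x"
  by (meson antisym lub refl ub2)
lemma mono2: "le y y' \<Longrightarrow> le (j a y) (j a y')"
  by (metis absorb2 ax1 jassoc)
lemma dist: "le a d \<Longrightarrow> le b d \<Longrightarrow> le c d \<Longrightarrow> j a (m b c) = m (j a b) (j a c)"
  using dist0[of a d b c] by (metis le_def')
lemma mdist: "le t u \<Longrightarrow> le x u \<Longrightarrow> le y u \<Longrightarrow> m t (j x y) = j (m t x) (m t y)"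
proof -
  assume t: "le t u" and x: "le x u" and y: "le y u"
  have tx: "le (m t x) u" using t m1 trans by blast
  have ty: "le (m t y) u" using t m1 trans by blast
  have "j (m t x) (m t y) = m (j (m t x) t) (j (m t x) y)"
    using dist[OF tx t y] by (metis dist massoc mcomm midem)
  also have "j (m t x) t = t" by (simp add: absorb2 m1)
  also have "j (m t x) y = j y (m t x)" using jcomm tx y by blast
  also have "\<dots> = m (j y t) (j y x)" using dist[OF y t x] .
  also have "m t (m (j y t) (j y x)) = m t (j y x)"
    by (metis absorb2 ax1 jcomm le_def' massoc t y)
  also have "j y x = j x y" using jcomm x y by blast
  finally show ?thesis by simp
qed

lemma iii': "j x y = j x (m y (j x y))"
  by (meson antisym ax3 mono2 m1)

lemma main: "j a (m b c) = m (j a b) (j a c)"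
proof -
  define u where "u = j a b"
  define v where "v = j a c"
  define t where "t = m u v"
  have w: "le (j a (m b c)) t"
    unfolding t_def u_def v_def by (meson m1 m2 mglb mono2)
  have at: "le a t" unfolding t_def u_def v_def by (simp add: ax1 mglb)
  have tu: "le t u" unfolding t_def by (rule m1)
  have tv: "le t v" unfolding t_def by (rule m2)
  have e1: "t = j a (m b t)"
  proof -
    have "t = m t u" using tu le_def' by metis
    also have "u = j a (m b u)" unfolding u_def using iii' by blast
    also have "m t (j a (m b u)) = j (m t a) (m t (m b u))"
      using mdist[OF tu] by (metis ax1 m2 u_def)
    also have "m t a = a" using at le_def' mcomm by metis
    also have "m t (m b u) = m b t" using tu le_def' massoc mcomm by metis
    finally show ?thesis .
  qed
  have e2: "t = j a (m c t)"
  proof -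
    have "t = m t v" using tv le_def' by metis
    also have "v = j a (m c v)" unfolding v_def using iii' by blast
    also have "m t (j a (m c v)) = j (m t a) (m t (m c v))"
      using mdist[OF tv] by (metis ax1 m2 v_def)
    also have "m t a = a" using at le_def' mcomm by metis
    also have "m t (m c v) = m c t" using tv le_def' massoc mcomm by metis
    finally show ?thesis .
  qed
  have "t = m (j a (m b t)) (j a (m c t))" using e1 e2 midem by metis
  also have "\<dots> = j a (m (m b t) (m c t))" using dist[OF at m2 m2] by simp
  finally have "le t (j a (m b c))"
    by (metis m1 massoc mcomm mono2)
  with w show ?thesis unfolding t_def u_def v_def using antisym by blast
qed

lemma lrb: "left_regular_band j"
  unfolding left_regular_band_def using jassoc jidem absorb ax1 by metis

end

theorem lemma3p2:
  fixes meet join :: "'a \<Rightarrow> 'a \<Rightarrow> 'a"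
  assumes "ado_semilattice meet join"
  shows "left_regular_band join \<and>
         (\<forall>a b c. join a (meet b c) = meet (join a b) (join a c))"
proof -
  interpret ado meet join by (rule ado.intro[OF assms])
  show ?thesis using lrb main by blast
qed

end
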